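(* Assume the setting and the nsCRAIG recurrence described in the context. Then every $\alpha_k$ produced by the recurrence is strictly positive (so the recurrence can only stop through $\beta_{k+1}=0$), and if $\beta_{k+1}=0$ for some $k$, then the nsCRAIG iterates $(u^{(k)},p^{(k)})$ equal the exact solution $(u_*,p_* )$ of the generalized saddle point system.
   Context: Setting: $M\in\mathbb{R}^{m\times m}$ is nonsymmetric and positive definite ($x^TMx>0$ for all $x\ne0$); $A\in\mathbb{R}^{m\times n}$ ($n\le m$) has full column rank; $C\in\mathbb{R}^{n\times n}$ is symmetric positive semidefinite; $b\in\mathbb{R}^n$ is nonzero; $N\in\mathbb{R}^{n\times n}$ is symmetric positive definite. Write $\|x\|_G=(x^TGx)^{1/2}$ for $G$ positive definite (for nonsymmetric $M$ this is the norm of its symmetric part). The generalized saddle point system is $Mu+Ap=0$, $A^Tu-Cp=b$, with unique solution $(u_*,p_* )$; $S=A^TM^{-1}A+C$. nsCRAIG recurrence (exact arithmetic): Initialization: $\beta_1=\|b\|_{N^{-1}}$, $q_1=N^{-1}b/\beta_1$, $Q_1=[q_1]$, $r_1=q_1$, $w_1=M^{-1}Aq_1$, $s_1=Cr_1$, $\alpha_1=(w_1^TMw_1+r_1^Ts_1)^{1/2}$, $v_1=w_1/\alpha_1$, $t_1=s_1/\alpha_1$, $\chi_1=\beta_1/\alpha_1$. For $k=1,2,\dots$: $\hat g_k=N^{-1}(A^Tv_k+t_k)$, $h_k=Q_k^TN\hat g_k\in\mathbb{R}^k$, $g_k=\hat g_k-Q_kh_k$, $\beta_{k+1}=\|g_k\|_N$;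 if $\beta_{k+1}=0$ the recurrence stops; otherwise $q_{k+1}=g_k/\beta_{k+1}$, $Q_{k+1}=[Q_k,q_{k+1}]$, $w_{k+1}=M^{-1}Aq_{k+1}-\beta_{k+1}v_k$, $r_{k+1}=q_{k+1}-(\beta_{k+1}/\alpha_k)r_k$, $s_{k+1}=Cr_{k+1}$, $\alpha_{k+1}=(w_{k+1}^TMw_{k+1}+r_{k+1}^Ts_{k+1})^{1/2}$, $v_{k+1}=w_{k+1}/\alpha_{k+1}$, $t_{k+1}=s_{k+1}/\alpha_{k+1}$, $\chi_{k+1}=-(\beta_{k+1}/\alpha_{k+1})\chi_k$. Matrices: $B_k\in\mathbb{R}^{k\times k}$ upper bidiagonal with $(B_k)_{ii}=\alpha_i$, $(B_k)_{i,i+1}=\beta_{i+1}$; $H_k\in\mathbb{R}^{k\times k}$ upper Hessenberg whose $j$-th column has entries $(H_k)_{ij}=(h_j)_i$ for $i\le j$, $(H_k)_{j+1,j}=\beta_{j+1}$ (if $j<k$), and zeros otherwise. The nsCRAIG iterates at step $k$ are $y_k=-B_k^{-1}H_k^{-1}(\beta_1e_1)$, $p^{(k)}=Q_ky_k$, $u^{(k)}=-M^{-1}Ap^{(k)}$, with $e_1$ the first unit vector of $\mathbb{R}^k$. *)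

theory Defs
  imports "Jordan_Normal_Form.Matrix" "Jordan_Normal_Form.DL_Rank"
begin

definition minv :: "real mat \<Rightarrow> real mat" where
  "minv X = (SOME Y. inverts_mat X Y \<and> inverts_mat Y X)"

definition Gnorm :: "real mat \<Rightarrow> real vec \<Rightarrow> real" where
  "Gnorm G x = sqrt (x \<bullet> (G *\<^sub>v x))"

definition pos_def_mat :: "nat \<Rightarrow> real mat \<Rightarrow> bool" where
  "pos_def_mat d G \<longleftrightarrow> G \<in> carrier_mat d d \<and>
     (\<forall>x \<in> carrier_vec d. x \<noteq> 0\<^sub>v d \<longrightarrow> x \<bullet> (G *\<^sub>v x) > 0)"

definition psd_mat :: "nat \<Rightarrow> real mat \<Rightarrow> bool" where
  "psd_mat d G \<longleftrightarrow> G \<in> carrier_mat d d \<and> (\<forall>x \<in> carrier_vec d. x \<bullet> (G *\<^sub>v x) \<ge> 0)"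

text \<open>State of the nsCRAIG recurrence after step k: the list [q_1,...,q_k] and
  r_k, v_k, t_k, alpha_k, chi_k.\<close>
record cstate =
  qs :: "real vec list"
  rr :: "real vec"
  vv :: "real vec"
  tt :: "real vec"
  al :: real
  ch :: real

definition cr_init :: "real mat \<Rightarrow> real mat \<Rightarrow> real mat \<Rightarrow> real mat \<Rightarrow> real vec \<Rightarrow> cstate" where
  "cr_init M A C N b =
    (let beta1 = Gnorm (minv N) b;
         q1 = (1 / beta1) \<cdot>\<^sub>v (minv N *\<^sub>v b);
         r1 = q1;
         w1 = minv M *\<^sub>v (A *\<^sub>v q1);
         s1 = C *\<^sub>v r1;
         alpha1 = sqrt (w1 \<bullet> (M *\<^sub>v w1) + r1 \<bullet> s1)
     in \<lparr> qs = [q1], rr = r1, vv = (1 / alpha1) \<cdot>\<^sub>v w1, tt = (1 / alpha1) \<cdot>\<^sub>v s1,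
          al = alpha1, ch = beta1 / alpha1 \<rparr>)"

definition Qmat :: "real mat \<Rightarrow> cstate \<Rightarrow> real mat" where
  "Qmat A S = mat_of_cols (dim_col A) (qs S)"

definition cr_ghat :: "real mat \<Rightarrow> real mat \<Rightarrow> cstate \<Rightarrow> real vec" where
  "cr_ghat A N S = minv N *\<^sub>v (transpose_mat A *\<^sub>v vv S + tt S)"

definition cr_h :: "real mat \<Rightarrow> real mat \<Rightarrow> cstate \<Rightarrow> real vec" where
  "cr_h A N S = transpose_mat (Qmat A S) *\<^sub>v (N *\<^sub>v cr_ghat A N S)"

definition cr_g :: "real mat \<Rightarrow> real mat \<Rightarrow> cstate \<Rightarrow> real vec" where
  "cr_g A N S = cr_ghat A N S - Qmat A S *\<^sub>v cr_h A N S"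

definition cr_beta_next :: "real mat \<Rightarrow> real mat \<Rightarrow> cstate \<Rightarrow> real" where
  "cr_beta_next A N S = Gnorm N (cr_g A N S)"

definition cr_next :: "real mat \<Rightarrow> real mat \<Rightarrow> real mat \<Rightarrow> real mat \<Rightarrow> cstate \<Rightarrow> cstate" where
  "cr_next M A C N S =
    (let beta' = cr_beta_next A N S;
         q' = (1 / beta') \<cdot>\<^sub>v cr_g A N S;
         w' = minv M *\<^sub>v (A *\<^sub>v q') - beta' \<cdot>\<^sub>v vv S;
         r' = q' - (beta' / al S) \<cdot>\<^sub>v rr S;
         s' = C *\<^sub>v r';
         alpha' = sqrt (w' \<bullet> (M *\<^sub>v w') + r' \<bullet> s')
     in \<lparr> qs = qs S @ [q'], rr = r', vv = (1 / alpha') \<cdot>\<^sub>v w', tt = (1 / alpha') \<cdot>\<^sub>v s',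
          al = alpha', ch = - (beta' / alpha') * ch S \<rparr>)"

text \<open>cr_state ... j is the state after step j+1 (steps are numbered from 1).\<close>
primrec cr_state :: "real mat \<Rightarrow> real mat \<Rightarrow> real mat \<Rightarrow> real mat \<Rightarrow> real vec \<Rightarrow> nat \<Rightarrow> cstate" where
  "cr_state M A C N b 0 = cr_init M A C N b"
| "cr_state M A C N b (Suc j) = cr_next M A C N (cr_state M A C N b j)"

definition cr_alpha :: "real mat \<Rightarrow> real mat \<Rightarrow> real mat \<Rightarrow> real mat \<Rightarrow> real vec \<Rightarrow> nat \<Rightarrow> real" where
  "cr_alpha M A C N b k = al (cr_state M A C N b (k - 1))"

fun cr_beta :: "real mat \<Rightarrow> real mat \<Rightarrow> real mat \<Rightarrow> real mat \<Rightarrow> real vec \<Rightarrow> nat \<Rightarrow> real" where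
  "cr_beta M A C N b 0 = 0"
| "cr_beta M A C N b (Suc 0) = Gnorm (minv N) b"
| "cr_beta M A C N b (Suc (Suc k)) = cr_beta_next A N (cr_state M A C N b k)"

definition cr_hk :: "real mat \<Rightarrow> real mat \<Rightarrow> real mat \<Rightarrow> real mat \<Rightarrow> real vec \<Rightarrow> nat \<Rightarrow> real vec" where
  "cr_hk M A C N b k = cr_h A N (cr_state M A C N b (k - 1))"

definition cr_B :: "real mat \<Rightarrow> real mat \<Rightarrow> real mat \<Rightarrow> real mat \<Rightarrow> real vec \<Rightarrow> nat \<Rightarrow> real mat" where
  "cr_B M A C N b k = mat k k (\<lambda>(i, j).
      if i = j then cr_alpha M A C N b (i + 1)
      else if j = i + 1 then cr_beta M A C N b (j + 1)
      else 0)"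

text \<open>H_k (upper Hessenberg), 0-based indices: column j holds h_{j+1} on and above the
  diagonal and beta_{j+2} just below it.\<close>
definition cr_H :: "real mat \<Rightarrow> real mat \<Rightarrow> real mat \<Rightarrow> real mat \<Rightarrow> real vec \<Rightarrow> nat \<Rightarrow> real mat" where
  "cr_H M A C N b k = mat k k (\<lambda>(i, j).
      if i \<le> j then cr_hk M A C N b (j + 1) $ i
      else if i = j + 1 then cr_beta M A C N b (j + 2)
      else 0)"

definition cr_y :: "real mat \<Rightarrow> real mat \<Rightarrow> real mat \<Rightarrow> real mat \<Rightarrow> real vec \<Rightarrow> nat \<Rightarrow> real vec" where
  "cr_y M A C N b k = - (minv (cr_B M A C N b k) *\<^sub>v
       (minv (cr_H M A C N b k) *\<^sub>v (cr_beta M A C N b 1 \<cdot>\<^sub>v unit_vec k 0)))"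

definition cr_p :: "real mat \<Rightarrow> real mat \<Rightarrow> real mat \<Rightarrow> real mat \<Rightarrow> real vec \<Rightarrow> nat \<Rightarrow> real vec" where
  "cr_p M A C N b k = Qmat A (cr_state M A C N b (k - 1)) *\<^sub>v cr_y M A C N b k"

definition cr_u :: "real mat \<Rightarrow> real mat \<Rightarrow> real mat \<Rightarrow> real mat \<Rightarrow> real vec \<Rightarrow> nat \<Rightarrow> real vec" where
  "cr_u M A C N b k = - (minv M *\<^sub>v (A *\<^sub>v cr_p M A C N b k))"

end

theory Submission
  imports Defs
begin

declare col_mult[simp del]

lemma minv_props:
  fixes X :: "real mat"
  assumes X: "X \<in> carrier_mat d d"
    and inj: "\<And>v. v \<in> carrier_vec d \<Longrightarrow> X *\<^sub>v v = 0\<^sub>v d \<Longrightarrow> v = 0\<^sub>v d"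
  shows "minv X \<in> carrier_mat d d \<and> X * minv X = 1\<^sub>m d \<and> minv X * X = 1\<^sub>m d"
proof -
  have "det X \<noteq> 0" using det_0_iff_vec_prod_zero[OF X] inj by blast
  from det_non_zero_imp_unit[OF X this, of undefined]
  obtain Y where Y: "Y \<in> carrier_mat d d" "Y * X = 1\<^sub>m d" "X * Y = 1\<^sub>m d"
    unfolding Units_def ring_mat_def by auto
  have ex: "\<exists>Y. inverts_mat X Y \<and> inverts_mat Y X"
    using Y X unfolding inverts_mat_def by (intro exI[of _ Y]) auto
  define Z where "Z = minv X"
  have Z: "inverts_mat X Z \<and> inverts_mat Z X"
    unfolding Z_def minv_def by (rule someI_ex[OF ex])
  hence 1: "X * Z = 1\<^sub>m d" and 2: "Z * X = 1\<^sub>m (dim_row Z)"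
    using X unfolding inverts_mat_def by auto
  have "dim_col (X * Z) = d" using 1 by simp
  hence dc: "dim_col Z = d" by simp
  have "dim_row (Z * X) = dim_row Z" by simp
  have "dim_col (Z * X) = d" using X by simp
  hence "dim_row Z = d" using 2 by (metis index_one_mat(3))
  hence Zc: "Z \<in> carrier_mat d d" using dc by auto
  show ?thesis using Zc 1 2 \<open>dim_row Z = d\<close> unfolding Z_def by simp
qed

lemma minv_apply:
  fixes X :: "real mat"
  assumes X: "X \<in> carrier_mat d d"
    and inj: "\<And>v. v \<in> carrier_vec d \<Longrightarrow> X *\<^sub>v v = 0\<^sub>v d \<Longrightarrow> v = 0\<^sub>v d"
    and v: "v \<in> carrier_vec d"
  shows "minv X *\<^sub>v (X *\<^sub>v v) = v" "X *\<^sub>v (minv X *\<^sub>v v) = v" "minv X *\<^sub>v v \<in> carrier_vec d"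
proof -
  note P = minv_props[OF X inj]
  have "(minv X * X) *\<^sub>v v = minv X *\<^sub>v (X *\<^sub>v v)" using P X v by (intro assoc_mult_mat_vec) auto
  thus "minv X *\<^sub>v (X *\<^sub>v v) = v" using P v by (metis one_mult_mat_vec)
  have "(X * minv X) *\<^sub>v v = X *\<^sub>v (minv X *\<^sub>v v)" using P X v by (intro assoc_mult_mat_vec) auto
  thus "X *\<^sub>v (minv X *\<^sub>v v) = v" using P v by (metis one_mult_mat_vec)
  show "minv X *\<^sub>v v \<in> carrier_vec d" using P v by (meson mult_mat_vec_carrier)
qed

lemma pd_inj:
  assumes "pos_def_mat d G" "x \<in> carrier_vec d" "G *\<^sub>v x = 0\<^sub>v d"
  shows "x = 0\<^sub>v d"
  using assms unfolding pos_def_mat_def by (metis less_irrefl scalar_prod_right_zero)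

lemma mult_unit_vec_col:
  fixes X :: "real mat"
  assumes "X \<in> carrier_mat nr nc" "i < nc"
  shows "X *\<^sub>v unit_vec nc i = col X i"
  using assms by (intro eq_vecI) auto

lemma sym_scalar:
  fixes X :: "real mat"
  assumes "X \<in> carrier_mat d d" "transpose_mat X = X" "x \<in> carrier_vec d" "y \<in> carrier_vec d"
  shows "x \<bullet> (X *\<^sub>v y) = y \<bullet> (X *\<^sub>v x)"
proof -
  have "x \<bullet> (X *\<^sub>v y) = (transpose_mat X *\<^sub>v x) \<bullet> y"
    using transpose_vec_mult_scalar[OF assms(1) assms(4) assms(3)] by simp
  also have "\<dots> = y \<bullet> (X *\<^sub>v x)" using assms by (simp add: comm_scalar_prod[of _ d])
  finally show ?thesis .
qed

lemma (in vec_space) non_distinct_low_rank':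
assumes "A \<in> carrier_mat n nc"
and "\<not> distinct (cols A)"
shows "rank A < nc"
proof -
  obtain S where "maximal S (\<lambda>T. T \<subseteq> set (cols A) \<and> lin_indpt T)"
    using maximal_exists[of "(\<lambda>T. T \<subseteq> set (cols A) \<and> lin_indpt T)" "card (set (cols A))" "{}"]
    by (meson List.finite_set card_mono empty_iff empty_subsetI finite_lin_indpt2 rev_finite_subset)
  then have "card S \<le> card (set (cols A))" by (simp add: card_mono maximal_def)
  then have "card S < nc"
    using assms(1) cols_length card_length \<open>\<not> distinct (cols A)\<close> card_distinct carrier_matD(2) nat_less_le
    by (metis dual_order.antisym dual_order.trans)
  then show ?thesis
    using rank_card_indpt[OF \<open>A \<in> carrier_mat n nc\<close> \<open>maximal S (\<lambda>T. T \<subseteq> set (cols A) \<and> lin_indpt T)\<close>]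
    by simp
qed

lemma (in vec_space) full_rank_inj:
assumes "A \<in> carrier_mat n nc" "rank A = nc" "v \<in> carrier_vec nc" "A *\<^sub>v v = 0\<^sub>v n"
shows "v = 0\<^sub>v nc"
proof (rule ccontr)
  assume v0: "v \<noteq> 0\<^sub>v nc"
  have d: "distinct (cols A)" using non_distinct_low_rank'[OF assms(1)] assms(2) by force
  have "lin_indpt (set (cols A))" using full_rank_lin_indpt[OF assms(1) assms(2) d] .
  moreover have "lin_dep (set (cols A))" using lin_depI[OF assms(1) assms(3) v0 assms(4) d] .
  ultimately show False by simp
qed

lemma mv_smult:
  fixes X :: "real mat"
  assumes "X \<in> carrier_mat nr nc" "v \<in> carrier_vec nc"
  shows "X *\<^sub>v (c \<cdot>\<^sub>v v) = c \<cdot>\<^sub>v (X *\<^sub>v v)"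
  using assms by (intro eq_vecI) (auto simp: scalar_prod_smult_right)

definition INV :: "nat \<Rightarrow> nat \<Rightarrow> real mat \<Rightarrow> real mat \<Rightarrow> real mat \<Rightarrow> real mat \<Rightarrow> cstate \<Rightarrow> nat \<Rightarrow> bool" where
  "INV m n M A C N S j \<longleftrightarrow> length (qs S) = Suc j \<and> set (qs S) \<subseteq> carrier_vec n \<and>
    (\<forall>a<Suc j. \<forall>c<Suc j. qs S ! a \<bullet> (N *\<^sub>v (qs S ! c)) = (if a = c then 1 else 0)) \<and>
    rr S \<in> carrier_vec n \<and>
    (\<forall>x\<in>carrier_vec n. (\<forall>a<Suc j. qs S ! a \<bullet> (N *\<^sub>v x) = 0) \<longrightarrow> rr S \<bullet> (N *\<^sub>v x) = 0) \<and>
    vv S \<in> carrier_vec m \<and> tt S \<in> carrier_vec n \<and> al S > 0 \<and>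
    minv M *\<^sub>v (A *\<^sub>v rr S) = al S \<cdot>\<^sub>v vv S \<and> C *\<^sub>v rr S = al S \<cdot>\<^sub>v tt S"

lemma next_fields:
  assumes "\<beta> = cr_beta_next A N S" "q = (1 / \<beta>) \<cdot>\<^sub>v cr_g A N S"
    "r = q - (\<beta> / al S) \<cdot>\<^sub>v rr S" "w = minv M *\<^sub>v (A *\<^sub>v q) - \<beta> \<cdot>\<^sub>v vv S"
    "\<alpha> = sqrt (w \<bullet> (M *\<^sub>v w) + r \<bullet> (C *\<^sub>v r))"
  shows "qs (cr_next M A C N S) = qs S @ [q]" "rr (cr_next M A C N S) = r"
    "vv (cr_next M A C N S) = (1 / \<alpha>) \<cdot>\<^sub>v w" "tt (cr_next M A C N S) = (1 / \<alpha>) \<cdot>\<^sub>v (C *\<^sub>v r)"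
    "al (cr_next M A C N S) = \<alpha>"
  using assms unfolding cr_next_def Let_def by simp_all

lemma init_fields:
  assumes "\<beta> = Gnorm (minv N) b" "q = (1 / \<beta>) \<cdot>\<^sub>v (minv N *\<^sub>v b)"
    "w = minv M *\<^sub>v (A *\<^sub>v q)"
    "\<alpha> = sqrt (w \<bullet> (M *\<^sub>v w) + q \<bullet> (C *\<^sub>v q))"
  shows "qs (cr_init M A C N b) = [q]" "rr (cr_init M A C N b) = q"
    "vv (cr_init M A C N b) = (1 / \<alpha>) \<cdot>\<^sub>v w" "tt (cr_init M A C N b) = (1 / \<alpha>) \<cdot>\<^sub>v (C *\<^sub>v q)"
    "al (cr_init M A C N b) = \<alpha>"
  using assms unfolding cr_init_def Let_def by simp_all

lemma mv_zero[simp]: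
  fixes X :: "real mat"
  assumes "X \<in> carrier_mat nr nc"
  shows "X *\<^sub>v 0\<^sub>v nc = 0\<^sub>v nr"
  using assms by (intro eq_vecI) auto

lemma lin2:
  fixes X :: "real mat"
  assumes "X \<in> carrier_mat nr nc" "u \<in> carrier_vec nc" "v \<in> carrier_vec nc"
  shows "X *\<^sub>v (u + c \<cdot>\<^sub>v v) = X *\<^sub>v u + c \<cdot>\<^sub>v (X *\<^sub>v v)"
  using assms by (simp add: mult_add_distrib_mat_vec[of X nr nc] mv_smult)

lemma mv_uminus:
  fixes X :: "real mat"
  assumes "X \<in> carrier_mat nr nc" "v \<in> carrier_vec nc"
  shows "X *\<^sub>v (- v) = - (X *\<^sub>v v)"
  using assms by (intro eq_vecI) auto

context
  fixes m n :: nat and M A C N :: "real mat" and b :: "real vec"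
  assumes M: "pos_def_mat m M"
    and A: "A \<in> carrier_mat m n"
    and Arank: "vec_space.rank m A = n"
    and C: "psd_mat n C" and Csym: "transpose_mat C = C"
    and b: "b \<in> carrier_vec n" and b0: "b \<noteq> 0\<^sub>v n"
    and N: "pos_def_mat n N" and Nsym: "transpose_mat N = N"
begin

lemma Mc: "M \<in> carrier_mat m m" using M unfolding pos_def_mat_def by auto
lemma Nc: "N \<in> carrier_mat n n" using N unfolding pos_def_mat_def by auto
lemma Cc: "C \<in> carrier_mat n n" using C unfolding psd_mat_def by auto
lemma Cpsd: "x \<in> carrier_vec n \<Longrightarrow> x \<bullet> (C *\<^sub>v x) \<ge> 0" using C unfolding psd_mat_def by auto
lemma Mpd: "x \<in> carrier_vec m \<Longrightarrow> x \<noteq> 0\<^sub>v m \<Longrightarrow> x \<bullet> (M *\<^sub>v x) > 0" using M unfolding pos_def_mat_def by auto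
lemma Npd: "x \<in> carrier_vec n \<Longrightarrow> x \<noteq> 0\<^sub>v n \<Longrightarrow> x \<bullet> (N *\<^sub>v x) > 0" using N unfolding pos_def_mat_def by auto
lemma Minj: "v \<in> carrier_vec m \<Longrightarrow> M *\<^sub>v v = 0\<^sub>v m \<Longrightarrow> v = 0\<^sub>v m" using pd_inj[OF M] by blast
lemma Ninj: "v \<in> carrier_vec n \<Longrightarrow> N *\<^sub>v v = 0\<^sub>v n \<Longrightarrow> v = 0\<^sub>v n" using pd_inj[OF N] by blast
lemma Minv: "v \<in> carrier_vec m \<Longrightarrow> minv M *\<^sub>v (M *\<^sub>v v) = v"
  "v \<in> carrier_vec m \<Longrightarrow> M *\<^sub>v (minv M *\<^sub>v v) = v"
  using minv_apply[OF Mc, of v] Minj by blast+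
lemma Ninv: "v \<in> carrier_vec n \<Longrightarrow> minv N *\<^sub>v (N *\<^sub>v v) = v"
  "v \<in> carrier_vec n \<Longrightarrow> N *\<^sub>v (minv N *\<^sub>v v) = v"
  using minv_apply[OF Nc, of v] Ninj by blast+
lemma Mic: "minv M \<in> carrier_mat m m" using minv_props[OF Mc Minj] by blast
lemma Nic: "minv N \<in> carrier_mat n n" using minv_props[OF Nc Ninj] by blast
lemma Ainj: "v \<in> carrier_vec n \<Longrightarrow> A *\<^sub>v v = 0\<^sub>v m \<Longrightarrow> v = 0\<^sub>v n"
  using vec_space.full_rank_inj[OF A Arank] by blast

lemma Nnonneg: "x \<in> carrier_vec n \<Longrightarrow> x \<bullet> (N *\<^sub>v x) \<ge> 0"
  using Npd[of x] Nc by (cases "x = 0\<^sub>v n") (auto simp: less_imp_le)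

lemma Nsym_sc: "x \<in> carrier_vec n \<Longrightarrow> y \<in> carrier_vec n \<Longrightarrow> x \<bullet> (N *\<^sub>v y) = y \<bullet> (N *\<^sub>v x)"
  using sym_scalar[OF Nc Nsym] by blast

lemma MiA_nz:
  assumes r: "r \<in> carrier_vec n" "r \<noteq> 0\<^sub>v n"
  shows "minv M *\<^sub>v (A *\<^sub>v r) \<noteq> 0\<^sub>v m"
proof
  assume h: "minv M *\<^sub>v (A *\<^sub>v r) = 0\<^sub>v m"
  have Ar: "A *\<^sub>v r \<in> carrier_vec m" using A r by simp
  have "A *\<^sub>v r = M *\<^sub>v (minv M *\<^sub>v (A *\<^sub>v r))" using Minv(2)[OF Ar, symmetric] by simp
  also have "\<dots> = 0\<^sub>v m" using h Mc by simp
  finally show False using Ainj[OF r(1)] r(2) by blast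
qed

lemma alpha_pos:
  assumes r: "r \<in> carrier_vec n" "r \<noteq> 0\<^sub>v n"
    and w: "w = minv M *\<^sub>v (A *\<^sub>v r)"
  shows "sqrt (w \<bullet> (M *\<^sub>v w) + r \<bullet> (C *\<^sub>v r)) > 0"
proof -
  have wc: "w \<in> carrier_vec m" using w Mic A r by simp
  have "w \<noteq> 0\<^sub>v m" using MiA_nz[OF r] w by simp
  hence "w \<bullet> (M *\<^sub>v w) > 0" using Mpd wc by blast
  moreover have "r \<bullet> (C *\<^sub>v r) \<ge> 0" using Cpsd r by blast
  ultimately show ?thesis by simp
qed

lemma An: "dim_col A = n" using A by auto

lemma QNQ:
  assumes I: "INV m n M A C N S j"
  shows "Qmat A S \<in> carrier_mat n (Suc j)" "transpose_mat (Qmat A S) * (N * Qmat A S) = 1\<^sub>m (Suc j)"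
proof -
  have L: "length (qs S) = Suc j" and Qs: "set (qs S) \<subseteq> carrier_vec n"
    and O: "\<forall>a<Suc j. \<forall>c<Suc j. qs S ! a \<bullet> (N *\<^sub>v (qs S ! c)) = (if a = c then 1 else 0)"
    using I unfolding INV_def by auto
  show Qc: "Qmat A S \<in> carrier_mat n (Suc j)" unfolding Qmat_def An using L mat_of_cols_carrier(1)[of n "qs S"] by simp
  show "transpose_mat (Qmat A S) * (N * Qmat A S) = 1\<^sub>m (Suc j)"
  proof (rule eq_matI)
    fix a c assume a: "a < dim_row (1\<^sub>m (Suc j) :: real mat)" and c: "c < dim_col (1\<^sub>m (Suc j) :: real mat)"
    hence a': "a < Suc j" and c': "c < Suc j" by auto
    have "(transpose_mat (Qmat A S) * (N * Qmat A S)) $$ (a, c) = col (Qmat A S) a \<bullet> (N *\<^sub>v col (Qmat A S) c)"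
      using Qc Nc a' c' by (simp add: index_mult_mat)
    also have "\<dots> = qs S ! a \<bullet> (N *\<^sub>v (qs S ! c))"
      unfolding Qmat_def An using a' c' L Qs by (simp add: subsetD)
    also have "\<dots> = 1\<^sub>m (Suc j) $$ (a, c)" using O a' c' by simp
    finally show "(transpose_mat (Qmat A S) * (N * Qmat A S)) $$ (a, c) = 1\<^sub>m (Suc j) $$ (a, c)" .
  qed (use Qc in auto)
qed

lemma QT_index:
  assumes I: "INV m n M A C N S j" and a: "a < Suc j" and x: "x \<in> carrier_vec n"
  shows "(transpose_mat (Qmat A S) *\<^sub>v x) $ a = qs S ! a \<bullet> x"
proof -
  have L: "length (qs S) = Suc j" and Qs: "set (qs S) \<subseteq> carrier_vec n"
    using I unfolding INV_def by auto
  have Qc: "Qmat A S \<in> carrier_mat n (Suc j)" using QNQ[OF I] by blast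
  have "(transpose_mat (Qmat A S) *\<^sub>v x) $ a = col (Qmat A S) a \<bullet> x" using Qc a by simp
  also have "\<dots> = qs S ! a \<bullet> x" unfolding Qmat_def An using a L Qs by (simp add: subsetD)
  finally show ?thesis .
qed

lemma g_facts:
  assumes I: "INV m n M A C N S j"
  shows "cr_ghat A N S \<in> carrier_vec n" "cr_h A N S \<in> carrier_vec (Suc j)" "cr_g A N S \<in> carrier_vec n"
    "cr_ghat A N S = Qmat A S *\<^sub>v cr_h A N S + cr_g A N S"
    "\<forall>a<Suc j. qs S ! a \<bullet> (N *\<^sub>v cr_g A N S) = 0"
    "N *\<^sub>v cr_ghat A N S = transpose_mat A *\<^sub>v vv S + tt S"
proof -
  have vc: "vv S \<in> carrier_vec m" and tc: "tt S \<in> carrier_vec n" using I unfolding INV_def by auto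
  have Qc: "Qmat A S \<in> carrier_mat n (Suc j)" and QQ: "transpose_mat (Qmat A S) * (N * Qmat A S) = 1\<^sub>m (Suc j)"
    using QNQ[OF I] by auto
  have zc: "transpose_mat A *\<^sub>v vv S + tt S \<in> carrier_vec n" using A vc tc by simp
  show gh: "cr_ghat A N S \<in> carrier_vec n" unfolding cr_ghat_def using Nic zc by simp
  show "N *\<^sub>v cr_ghat A N S = transpose_mat A *\<^sub>v vv S + tt S" unfolding cr_ghat_def using Ninv(2)[OF zc] .
  show hc: "cr_h A N S \<in> carrier_vec (Suc j)" unfolding cr_h_def using Qc Nc gh by simp
  show gc: "cr_g A N S \<in> carrier_vec n" unfolding cr_g_def using Qc gh hc by simp
  show "cr_ghat A N S = Qmat A S *\<^sub>v cr_h A N S + cr_g A N S"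
    unfolding cr_g_def using Qc gh hc by (intro eq_vecI) auto
  have Qhc: "Qmat A S *\<^sub>v cr_h A N S \<in> carrier_vec n" using Qc hc by simp
  have "transpose_mat (Qmat A S) *\<^sub>v (N *\<^sub>v cr_g A N S)
      = transpose_mat (Qmat A S) *\<^sub>v (N *\<^sub>v cr_ghat A N S) - transpose_mat (Qmat A S) *\<^sub>v (N *\<^sub>v (Qmat A S *\<^sub>v cr_h A N S))"
    unfolding cr_g_def using Qc Nc gh Qhc
    by (simp add: mult_minus_distrib_mat_vec[of N n n] mult_minus_distrib_mat_vec[of "transpose_mat (Qmat A S)" "Suc j" n])
  also have "transpose_mat (Qmat A S) *\<^sub>v (N *\<^sub>v (Qmat A S *\<^sub>v cr_h A N S)) = (transpose_mat (Qmat A S) * (N * Qmat A S)) *\<^sub>v cr_h A N S"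
  proof -
    have 1: "(transpose_mat (Qmat A S) * (N * Qmat A S)) *\<^sub>v cr_h A N S = transpose_mat (Qmat A S) *\<^sub>v ((N * Qmat A S) *\<^sub>v cr_h A N S)"
      by (rule assoc_mult_mat_vec) (use Qc Nc hc in auto)
    have 2: "(N * Qmat A S) *\<^sub>v cr_h A N S = N *\<^sub>v (Qmat A S *\<^sub>v cr_h A N S)"
      by (rule assoc_mult_mat_vec) (use Qc Nc hc in auto)
    show ?thesis using 1 2 by simp
  qed
  also have "\<dots> = cr_h A N S" using QQ hc by simp
  also have "transpose_mat (Qmat A S) *\<^sub>v (N *\<^sub>v cr_ghat A N S) = cr_h A N S" unfolding cr_h_def ..
  finally have z: "transpose_mat (Qmat A S) *\<^sub>v (N *\<^sub>v cr_g A N S) = 0\<^sub>v (Suc j)"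
    using hc by simp
  show "\<forall>a<Suc j. qs S ! a \<bullet> (N *\<^sub>v cr_g A N S) = 0"
  proof (intro allI impI)
    fix a assume a: "a < Suc j"
    have "qs S ! a \<bullet> (N *\<^sub>v cr_g A N S) = (transpose_mat (Qmat A S) *\<^sub>v (N *\<^sub>v cr_g A N S)) $ a"
      using QT_index[OF I a] Nc gc by simp
    also have "\<dots> = 0" using z a by simp
    finally show "qs S ! a \<bullet> (N *\<^sub>v cr_g A N S) = 0" .
  qed
qed

lemma smult_inv_cancel:
  fixes w :: "real vec"
  assumes "\<alpha> \<noteq> 0"
  shows "\<alpha> \<cdot>\<^sub>v ((1 / \<alpha>) \<cdot>\<^sub>v w) = w"
  using assms by (simp add: smult_smult_assoc)

lemma inv_init: "INV m n M A C N (cr_init M A C N b) 0"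
proof -
  define y where "y = minv N *\<^sub>v b"
  define \<beta> where "\<beta> = Gnorm (minv N) b"
  define q where "q = (1 / \<beta>) \<cdot>\<^sub>v (minv N *\<^sub>v b)"
  define w where "w = minv M *\<^sub>v (A *\<^sub>v q)"
  define \<alpha> where "\<alpha> = sqrt (w \<bullet> (M *\<^sub>v w) + q \<bullet> (C *\<^sub>v q))"
  note F = init_fields[OF \<beta>_def q_def w_def \<alpha>_def]
  have yc: "y \<in> carrier_vec n" unfolding y_def using Nic b by simp
  have Ny: "N *\<^sub>v y = b" unfolding y_def using Ninv(2)[OF b] .
  have y0: "y \<noteq> 0\<^sub>v n" using Ny b0 Nc by auto
  have pos: "y \<bullet> (N *\<^sub>v y) > 0" using Npd[OF yc y0] .
  have "b \<bullet> y = y \<bullet> (N *\<^sub>v y)" using Ny yc Nc by (metis comm_scalar_prod mult_mat_vec_carrier)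
  hence \<beta>2: "\<beta> = sqrt (y \<bullet> (N *\<^sub>v y))" unfolding \<beta>_def Gnorm_def y_def by simp
  hence \<beta>p: "\<beta> > 0" using pos by simp
  have \<beta>sq: "\<beta> * \<beta> = y \<bullet> (N *\<^sub>v y)" using \<beta>2 pos by (simp add: less_imp_le)
  have qy: "q = (1 / \<beta>) \<cdot>\<^sub>v y" unfolding q_def y_def ..
  have qc: "q \<in> carrier_vec n" using qy yc by simp
  have qNq: "q \<bullet> (N *\<^sub>v q) = 1"
  proof -
    have "q \<bullet> (N *\<^sub>v q) = (1/\<beta>) * ((1/\<beta>) * (y \<bullet> (N *\<^sub>v y)))"
      unfolding qy using yc Nc by (simp add: mv_smult[OF Nc yc])
    also have "\<dots> = 1" using \<beta>sq \<beta>p pos by (simp add: field_simps)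
    finally show ?thesis .
  qed
  have q0: "q \<noteq> 0\<^sub>v n" using qNq Nc qc by auto
  have \<alpha>p: "\<alpha> > 0" unfolding \<alpha>_def using alpha_pos[OF qc q0 w_def] .
  have wc: "w \<in> carrier_vec m" unfolding w_def using Mic A qc by simp
  show ?thesis unfolding INV_def F
    using qc qNq wc \<alpha>p Cc smult_inv_cancel[of \<alpha>] by (auto simp: w_def)
qed

lemma beta_sq:
  assumes I: "INV m n M A C N S j" and nz: "cr_beta_next A N S \<noteq> 0"
  shows "cr_beta_next A N S * cr_beta_next A N S = cr_g A N S \<bullet> (N *\<^sub>v cr_g A N S)"
    "cr_g A N S \<bullet> (N *\<^sub>v cr_g A N S) > 0"
proof -
  have gc: "cr_g A N S \<in> carrier_vec n" using g_facts[OF I] by blast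
  have nn: "cr_g A N S \<bullet> (N *\<^sub>v cr_g A N S) \<ge> 0" using Nnonneg[OF gc] .
  have e: "cr_beta_next A N S = sqrt (cr_g A N S \<bullet> (N *\<^sub>v cr_g A N S))"
    unfolding cr_beta_next_def Gnorm_def ..
  show "cr_beta_next A N S * cr_beta_next A N S = cr_g A N S \<bullet> (N *\<^sub>v cr_g A N S)"
    unfolding e using nn by simp
  show "cr_g A N S \<bullet> (N *\<^sub>v cr_g A N S) > 0" using nn nz e by fastforce
qed

lemma beta_zero:
  assumes I: "INV m n M A C N S j" and z: "cr_beta_next A N S = 0"
  shows "cr_g A N S = 0\<^sub>v n"
proof -
  have gc: "cr_g A N S \<in> carrier_vec n" using g_facts[OF I] by blast
  have "cr_g A N S \<bullet> (N *\<^sub>v cr_g A N S) = 0"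
    using z Nnonneg[OF gc] unfolding cr_beta_next_def Gnorm_def by simp
  thus ?thesis using Npd[OF gc] by fastforce
qed

lemma inv_step:
  assumes I: "INV m n M A C N S j" and nz: "cr_beta_next A N S \<noteq> 0"
  shows "INV m n M A C N (cr_next M A C N S) (Suc j)"
proof -
  define \<beta> where "\<beta> = cr_beta_next A N S"
  define g where "g = cr_g A N S"
  define q where "q = (1 / \<beta>) \<cdot>\<^sub>v cr_g A N S"
  define r where "r = q - (\<beta> / al S) \<cdot>\<^sub>v rr S"
  define w where "w = minv M *\<^sub>v (A *\<^sub>v q) - \<beta> \<cdot>\<^sub>v vv S"
  define \<alpha> where "\<alpha> = sqrt (w \<bullet> (M *\<^sub>v w) + r \<bullet> (C *\<^sub>v r))"
  note F = next_fields[OF \<beta>_def q_def r_def w_def \<alpha>_def]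
  have L: "length (qs S) = Suc j" and Qs: "set (qs S) \<subseteq> carrier_vec n"
    and O: "\<forall>a<Suc j. \<forall>c<Suc j. qs S ! a \<bullet> (N *\<^sub>v (qs S ! c)) = (if a = c then 1 else 0)"
    and rc: "rr S \<in> carrier_vec n"
    and Ro: "\<forall>x\<in>carrier_vec n. (\<forall>a<Suc j. qs S ! a \<bullet> (N *\<^sub>v x) = 0) \<longrightarrow> rr S \<bullet> (N *\<^sub>v x) = 0"
    and vc: "vv S \<in> carrier_vec m" and tc: "tt S \<in> carrier_vec n" and alp: "al S > 0"
    and RW: "minv M *\<^sub>v (A *\<^sub>v rr S) = al S \<cdot>\<^sub>v vv S" and RC: "C *\<^sub>v rr S = al S \<cdot>\<^sub>v tt S"
    using I unfolding INV_def by auto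
  have gc: "g \<in> carrier_vec n" and go: "\<forall>a<Suc j. qs S ! a \<bullet> (N *\<^sub>v g) = 0"
    using g_facts[OF I] unfolding g_def by auto
  have bsq: "\<beta> * \<beta> = g \<bullet> (N *\<^sub>v g)" and gpos: "g \<bullet> (N *\<^sub>v g) > 0"
    using beta_sq[OF I nz] unfolding \<beta>_def g_def by auto
  have b0: "\<beta> \<noteq> 0" using nz unfolding \<beta>_def .
  have qg: "q = (1 / \<beta>) \<cdot>\<^sub>v g" unfolding q_def g_def ..
  have qc: "q \<in> carrier_vec n" using qg gc by simp
  have Nq: "N *\<^sub>v q = (1 / \<beta>) \<cdot>\<^sub>v (N *\<^sub>v g)" unfolding qg using mv_smult[OF Nc gc] .
  have qNq: "q \<bullet> (N *\<^sub>v q) = 1"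
  proof -
    have "q \<bullet> (N *\<^sub>v q) = (1/\<beta>) * ((1/\<beta>) * (g \<bullet> (N *\<^sub>v g)))"
      unfolding Nq unfolding qg using gc Nc by simp
    also have "\<dots> = 1" using bsq b0 gpos by (simp add: field_simps)
    finally show ?thesis .
  qed
  have qo: "\<forall>a<Suc j. qs S ! a \<bullet> (N *\<^sub>v q) = 0"
  proof (intro allI impI)
    fix a assume a: "a < Suc j"
    have ac: "qs S ! a \<in> carrier_vec n" using Qs L a by (simp add: subsetD)
    show "qs S ! a \<bullet> (N *\<^sub>v q) = 0" unfolding Nq using go a ac Nc by simp
  qed
  have qo': "\<forall>a<Suc j. q \<bullet> (N *\<^sub>v (qs S ! a)) = 0"
  proof (intro allI impI)
    fix a assume a: "a < Suc j"
    have ac: "qs S ! a \<in> carrier_vec n" using Qs L a by (simp add: subsetD)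
    show "q \<bullet> (N *\<^sub>v (qs S ! a)) = 0" using Nsym_sc[OF qc ac] qo a by simp
  qed
  have L': "length (qs S @ [q]) = Suc (Suc j)" using L by simp
  have Qs': "set (qs S @ [q]) \<subseteq> carrier_vec n" using Qs qc by simp
  have nth': "\<And>a. a < Suc (Suc j) \<Longrightarrow> (qs S @ [q]) ! a = (if a < Suc j then qs S ! a else q)"
    using L by (simp add: nth_append)
  have O': "\<forall>a<Suc (Suc j). \<forall>c<Suc (Suc j). (qs S @ [q]) ! a \<bullet> (N *\<^sub>v ((qs S @ [q]) ! c)) = (if a = c then 1 else 0)"
  proof (intro allI impI)
    fix a c assume a: "a < Suc (Suc j)" and c: "c < Suc (Suc j)"
    show "(qs S @ [q]) ! a \<bullet> (N *\<^sub>v ((qs S @ [q]) ! c)) = (if a = c then 1 else 0)"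
      unfolding nth'[OF a] nth'[OF c] using O qo qo' qNq a c by auto
  qed
  have rc': "r \<in> carrier_vec n" unfolding r_def using qc rc by simp
  have Nrr: "N *\<^sub>v rr S \<in> carrier_vec n" using Nc rc by simp
  have rN: "\<And>x. x \<in> carrier_vec n \<Longrightarrow> r \<bullet> (N *\<^sub>v x) = q \<bullet> (N *\<^sub>v x) - (\<beta> / al S) * (rr S \<bullet> (N *\<^sub>v x))"
    unfolding r_def using qc rc Nc
    by (subst minus_scalar_prod_distrib[of _ n]) auto
  have Ro': "\<forall>x\<in>carrier_vec n. (\<forall>a<Suc (Suc j). (qs S @ [q]) ! a \<bullet> (N *\<^sub>v x) = 0) \<longrightarrow> r \<bullet> (N *\<^sub>v x) = 0"
  proof (intro ballI impI)
    fix x assume x: "x \<in> carrier_vec n" and h: "\<forall>a<Suc (Suc j). (qs S @ [q]) ! a \<bullet> (N *\<^sub>v x) = 0"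
    have h1: "\<forall>a<Suc j. qs S ! a \<bullet> (N *\<^sub>v x) = 0"
    proof (intro allI impI)
      fix a assume a: "a < Suc j"
      show "qs S ! a \<bullet> (N *\<^sub>v x) = 0" using h[rule_format, of a] nth'[of a] a by simp
    qed
    have h2: "q \<bullet> (N *\<^sub>v x) = 0" using h nth'[of "Suc j"] by auto
    show "r \<bullet> (N *\<^sub>v x) = 0" using rN[OF x] h2 Ro x h1 by simp
  qed
  have rNq: "r \<bullet> (N *\<^sub>v q) = 1" using rN[OF qc] qNq Ro qc qo by simp
  have r0: "r \<noteq> 0\<^sub>v n" using rNq Nc qc by auto
  have wr: "w = minv M *\<^sub>v (A *\<^sub>v r)"
  proof -
    have Aq: "A *\<^sub>v q \<in> carrier_vec m" using A qc by simp
    have Ar: "A *\<^sub>v rr S \<in> carrier_vec m" using A rc by simp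
    have "A *\<^sub>v r = A *\<^sub>v q - (\<beta> / al S) \<cdot>\<^sub>v (A *\<^sub>v rr S)"
      unfolding r_def using A qc rc by (simp add: mult_minus_distrib_mat_vec[of A m n] mv_smult[OF A rc])
    hence "minv M *\<^sub>v (A *\<^sub>v r) = minv M *\<^sub>v (A *\<^sub>v q) - (\<beta> / al S) \<cdot>\<^sub>v (minv M *\<^sub>v (A *\<^sub>v rr S))"
      using Mic Aq Ar by (simp add: mult_minus_distrib_mat_vec[of "minv M" m m] mv_smult[OF Mic Ar])
    also have "\<dots> = minv M *\<^sub>v (A *\<^sub>v q) - \<beta> \<cdot>\<^sub>v vv S"
      unfolding RW using alp by (simp add: smult_smult_assoc)
    finally show ?thesis unfolding w_def by simp
  qed
  have \<alpha>p: "\<alpha> > 0" unfolding \<alpha>_def using alpha_pos[OF rc' r0 wr] .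
  have wc: "w \<in> carrier_vec m" unfolding wr using Mic A rc' by simp
  show ?thesis unfolding INV_def F
    using L' Qs' O' rc' Ro' wc \<alpha>p Cc smult_inv_cancel[of \<alpha>] rc' by (auto simp: wr)
qed

abbreviation "st j \<equiv> cr_state M A C N b j"

lemma qs_next: "qs (cr_next M A C N S) = qs S @ [(1 / cr_beta_next A N S) \<cdot>\<^sub>v cr_g A N S]"
  unfolding cr_next_def Let_def by simp

lemma len_qs: "length (qs (st j)) = Suc j"
  by (induction j) (auto simp: qs_next cr_init_def Let_def)

lemma qs_prefix: "i \<le> j \<Longrightarrow> qs (st j) ! i = qs (st i) ! i"
proof (induction j)
  case 0 thus ?case by simp
next
  case (Suc j)
  show ?case
  proof (cases "i = Suc j")
    case True thus ?thesis by simp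
  next
    case False
    hence "i \<le> j" using Suc.prems by simp
    thus ?thesis using Suc.IH len_qs[of j] by (simp add: qs_next nth_append)
  qed
qed

lemma qs_last: "qs (st (Suc i)) ! Suc i = (1 / cr_beta_next A N (st i)) \<cdot>\<^sub>v cr_g A N (st i)"
  using len_qs[of i] by (simp add: qs_next nth_append)

lemma inv_state:
  "(\<forall>i. 1 \<le> i \<and> i \<le> j \<longrightarrow> cr_beta M A C N b (i+1) \<noteq> 0) \<Longrightarrow> INV m n M A C N (st j) j"
proof (induction j)
  case 0 thus ?case using inv_init by simp
next
  case (Suc j)
  have "INV m n M A C N (st j) j" using Suc by auto
  moreover have "cr_beta_next A N (st j) \<noteq> 0"
    using Suc.prems[rule_format, of "Suc j"] by simp
  ultimately show ?case using inv_step by simp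
qed

lemma F12_0:
  "minv M *\<^sub>v (A *\<^sub>v (qs (st 0) ! 0)) = al (st 0) \<cdot>\<^sub>v vv (st 0)"
  "C *\<^sub>v (qs (st 0) ! 0) = al (st 0) \<cdot>\<^sub>v tt (st 0)"
proof -
  have "qs (st 0) ! 0 = rr (st 0)" by (simp add: cr_init_def Let_def)
  thus "minv M *\<^sub>v (A *\<^sub>v (qs (st 0) ! 0)) = al (st 0) \<cdot>\<^sub>v vv (st 0)"
       "C *\<^sub>v (qs (st 0) ! 0) = al (st 0) \<cdot>\<^sub>v tt (st 0)"
    using inv_init unfolding INV_def by auto
qed

lemma F12_Suc:
  assumes I: "INV m n M A C N (st i) i" and I': "INV m n M A C N (st (Suc i)) (Suc i)"
  shows "minv M *\<^sub>v (A *\<^sub>v (qs (st (Suc i)) ! Suc i)) = al (st (Suc i)) \<cdot>\<^sub>v vv (st (Suc i)) + cr_beta_next A N (st i) \<cdot>\<^sub>v vv (st i)"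
    "C *\<^sub>v (qs (st (Suc i)) ! Suc i) = al (st (Suc i)) \<cdot>\<^sub>v tt (st (Suc i)) + cr_beta_next A N (st i) \<cdot>\<^sub>v tt (st i)"
proof -
  define c where "c = cr_beta_next A N (st i) / al (st i)"
  define q where "q = qs (st (Suc i)) ! Suc i"
  have rdef: "rr (st (Suc i)) = q - c \<cdot>\<^sub>v rr (st i)"
    unfolding q_def c_def qs_last by (simp add: cr_next_def Let_def)
  have rc: "rr (st i) \<in> carrier_vec n" and alp: "al (st i) > 0"
    and RW: "minv M *\<^sub>v (A *\<^sub>v rr (st i)) = al (st i) \<cdot>\<^sub>v vv (st i)"
    and RC: "C *\<^sub>v rr (st i) = al (st i) \<cdot>\<^sub>v tt (st i)"
    using I unfolding INV_def by auto
  have rc': "rr (st (Suc i)) \<in> carrier_vec n"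
    and RW': "minv M *\<^sub>v (A *\<^sub>v rr (st (Suc i))) = al (st (Suc i)) \<cdot>\<^sub>v vv (st (Suc i))"
    and RC': "C *\<^sub>v rr (st (Suc i)) = al (st (Suc i)) \<cdot>\<^sub>v tt (st (Suc i))"
    using I' unfolding INV_def by auto
  have qc: "q \<in> carrier_vec n" using I' len_qs[of "Suc i"] unfolding INV_def q_def
    by (metis lessI nth_mem subsetD)
  have qr: "q = rr (st (Suc i)) + c \<cdot>\<^sub>v rr (st i)"
    unfolding rdef using qc rc by (intro eq_vecI) auto
  have cb: "c * al (st i) = cr_beta_next A N (st i)" unfolding c_def using alp by simp
  have "minv M *\<^sub>v (A *\<^sub>v q) = minv M *\<^sub>v (A *\<^sub>v rr (st (Suc i)) + c \<cdot>\<^sub>v (A *\<^sub>v rr (st i)))"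
    unfolding qr using lin2[OF A rc' rc] by simp
  also have "\<dots> = minv M *\<^sub>v (A *\<^sub>v rr (st (Suc i))) + c \<cdot>\<^sub>v (minv M *\<^sub>v (A *\<^sub>v rr (st i)))"
    using lin2[OF Mic] A rc rc' by simp
  finally show "minv M *\<^sub>v (A *\<^sub>v (qs (st (Suc i)) ! Suc i)) = al (st (Suc i)) \<cdot>\<^sub>v vv (st (Suc i)) + cr_beta_next A N (st i) \<cdot>\<^sub>v vv (st i)"
    unfolding q_def[symmetric] RW RW' smult_smult_assoc cb .
  have "C *\<^sub>v q = C *\<^sub>v rr (st (Suc i)) + c \<cdot>\<^sub>v (C *\<^sub>v rr (st i))"
    unfolding qr using lin2[OF Cc rc' rc] by simp
  thus "C *\<^sub>v (qs (st (Suc i)) ! Suc i) = al (st (Suc i)) \<cdot>\<^sub>v tt (st (Suc i)) + cr_beta_next A N (st i) \<cdot>\<^sub>v tt (st i)"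
    unfolding q_def[symmetric] RC RC' smult_smult_assoc cb .
qed

lemma F3:
  assumes I: "INV m n M A C N (st i) i"
  shows "N *\<^sub>v (Qmat A (st i) *\<^sub>v cr_h A N (st i) + cr_beta_next A N (st i) \<cdot>\<^sub>v (qs (st (Suc i)) ! Suc i))
     = transpose_mat A *\<^sub>v vv (st i) + tt (st i)"
proof -
  have gq: "cr_beta_next A N (st i) \<cdot>\<^sub>v (qs (st (Suc i)) ! Suc i) = cr_g A N (st i)"
  proof (cases "cr_beta_next A N (st i) = 0")
    case True
    hence "cr_g A N (st i) = 0\<^sub>v n" using beta_zero[OF I] by blast
    thus ?thesis unfolding qs_last using True by (intro eq_vecI) auto
  next
    case False thus ?thesis unfolding qs_last by (simp add: smult_inv_cancel)
  qed
  show ?thesis unfolding gq using g_facts[OF I] by simp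
qed

lemma Qmat_st: "Qmat A (st j) = mat_of_cols n (qs (st j))" unfolding Qmat_def An ..

lemma Qc_st: "Qmat A (st j) \<in> carrier_mat n (Suc j)"
  unfolding Qmat_st using mat_of_cols_carrier(1)[of n "qs (st j)"] len_qs[of j] by simp

lemma H_carrier: "cr_H M A C N b k \<in> carrier_mat k k" unfolding cr_H_def by simp
lemma B_carrier: "cr_B M A C N b k \<in> carrier_mat k k" unfolding cr_B_def by simp

lemma colH:
  assumes j: "j < Suc K" and Z: "cr_beta_next A N (st K) = 0"
    and I: "\<forall>i\<le>K. INV m n M A C N (st i) i"
  shows "Qmat A (st K) *\<^sub>v col (cr_H M A C N b (Suc K)) j
     = Qmat A (st j) *\<^sub>v cr_h A N (st j) + cr_beta_next A N (st j) \<cdot>\<^sub>v (qs (st (Suc j)) ! Suc j)"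
proof -
  define k where "k = Suc K"
  define h where "h = cr_h A N (st j)"
  define ext where "ext = vec k (\<lambda>i. if i \<le> j then h $ i else 0)"
  define \<beta> where "\<beta> = cr_beta_next A N (st j)"
  have Qc: "Qmat A (st K) \<in> carrier_mat n k" unfolding k_def by (rule Qc_st)
  have jk: "j < k" using j k_def by simp
  have Ij: "INV m n M A C N (st j) j" using I j by simp
  have IK: "INV m n M A C N (st K) K" using I by simp
  have hc: "h \<in> carrier_vec (Suc j)" using g_facts[OF Ij] h_def by simp
  have colH: "col (cr_H M A C N b k) j = ext + \<beta> \<cdot>\<^sub>v unit_vec k (Suc j)"
    using jk unfolding ext_def h_def \<beta>_def cr_H_def cr_hk_def
    by (intro eq_vecI) (auto simp: numeral_2_eq_2 unit_vec_def)
  have ext_eq: "Qmat A (st K) *\<^sub>v ext = Qmat A (st j) *\<^sub>v h"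
  proof (rule eq_vecI)
    show "dim_vec (Qmat A (st K) *\<^sub>v ext) = dim_vec (Qmat A (st j) *\<^sub>v h)"
      using Qc Qc_st[of j] by simp
    fix r assume "r < dim_vec (Qmat A (st j) *\<^sub>v h)"
    hence r: "r < n" using Qc_st[of j] by simp
    have "(Qmat A (st K) *\<^sub>v ext) $ r = (\<Sum>i\<in>{0..<k}. Qmat A (st K) $$ (r, i) * ext $ i)"
      using Qc r unfolding ext_def by (simp add: scalar_prod_def)
    also have "\<dots> = (\<Sum>i\<in>{0..<Suc j}. Qmat A (st j) $$ (r, i) * h $ i)"
    proof (rule sum.mono_neutral_cong_right)
      show "finite {0..<k}" by simp
      show "{0..<Suc j} \<subseteq> {0..<k}" using jk by auto
      show "\<forall>i\<in>{0..<k} - {0..<Suc j}. Qmat A (st K) $$ (r, i) * ext $ i = 0"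
        unfolding ext_def by auto
      show "\<And>i. i \<in> {0..<Suc j} \<Longrightarrow> Qmat A (st K) $$ (r, i) * ext $ i = Qmat A (st j) $$ (r, i) * h $ i"
      proof -
        fix i assume "i \<in> {0..<Suc j}"
        hence i: "i \<le> j" by simp
        have "Qmat A (st K) $$ (r, i) = qs (st K) ! i $ r"
          unfolding Qmat_st using r i jk len_qs[of K] k_def by (simp add: mat_of_cols_index)
        also have "\<dots> = qs (st j) ! i $ r" using qs_prefix[of i K] qs_prefix[of i j] i jk k_def by simp
        also have "\<dots> = Qmat A (st j) $$ (r, i)"
          unfolding Qmat_st using r i len_qs[of j] by (simp add: mat_of_cols_index)
        finally show "Qmat A (st K) $$ (r, i) * ext $ i = Qmat A (st j) $$ (r, i) * h $ i"
          unfolding ext_def using i jk by simp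
      qed
    qed
    also have "\<dots> = (Qmat A (st j) *\<^sub>v h) $ r"
      using Qc_st[of j] r hc by (simp add: scalar_prod_def)
    finally show "(Qmat A (st K) *\<^sub>v ext) $ r = (Qmat A (st j) *\<^sub>v h) $ r" .
  qed
  have unit_eq: "Qmat A (st K) *\<^sub>v (\<beta> \<cdot>\<^sub>v unit_vec k (Suc j)) = \<beta> \<cdot>\<^sub>v (qs (st (Suc j)) ! Suc j)"
  proof (cases "Suc j < k")
    case True
    have sub: "set (qs (st K)) \<subseteq> carrier_vec n" using IK unfolding INV_def by simp
    have "Qmat A (st K) *\<^sub>v unit_vec k (Suc j) = col (Qmat A (st K)) (Suc j)"
      using mult_unit_vec_col[OF Qc True] .
    also have "\<dots> = qs (st K) ! Suc j" unfolding Qmat_st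
      using True len_qs[of K] k_def sub by (intro col_mat_of_cols) auto
    also have "\<dots> = qs (st (Suc j)) ! Suc j" using qs_prefix[of "Suc j" K] True k_def by simp
    finally show ?thesis using mv_smult[OF Qc] by simp
  next
    case False
    hence jK: "j = K" using jk k_def by simp
    hence b0: "\<beta> = 0" using Z \<beta>_def by simp
    have gc: "cr_g A N (st j) \<in> carrier_vec n" using g_facts[OF Ij] by simp
    have qc: "qs (st (Suc j)) ! Suc j \<in> carrier_vec n" unfolding qs_last using gc by simp
    have "\<beta> \<cdot>\<^sub>v unit_vec k (Suc j) = 0\<^sub>v k" using b0 by (intro eq_vecI) auto
    moreover have "\<beta> \<cdot>\<^sub>v (qs (st (Suc j)) ! Suc j) = 0\<^sub>v n" using b0 qc by (intro eq_vecI) auto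
    ultimately show ?thesis using Qc by simp
  qed
  have extc: "ext \<in> carrier_vec k" unfolding ext_def by simp
  have "Qmat A (st K) *\<^sub>v col (cr_H M A C N b k) j = Qmat A (st K) *\<^sub>v ext + Qmat A (st K) *\<^sub>v (\<beta> \<cdot>\<^sub>v unit_vec k (Suc j))"
    unfolding colH using Qc extc by (simp add: mult_add_distrib_mat_vec[of _ n k])
  also have "\<dots> = Qmat A (st j) *\<^sub>v h + \<beta> \<cdot>\<^sub>v (qs (st (Suc j)) ! Suc j)"
    by (simp only: ext_eq unit_eq)
  finally show ?thesis by (simp only: h_def \<beta>_def k_def)
qed

lemma colNQH:
  assumes j: "j < Suc K" and Z: "cr_beta_next A N (st K) = 0"
    and I: "\<forall>i\<le>K. INV m n M A C N (st i) i"
  shows "col (N * Qmat A (st K) * cr_H M A C N b (Suc K)) j = transpose_mat A *\<^sub>v vv (st j) + tt (st j)"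
proof -
  have Qc: "Qmat A (st K) \<in> carrier_mat n (Suc K)" by (rule Qc_st)
  have Hc: "cr_H M A C N b (Suc K) \<in> carrier_mat (Suc K) (Suc K)" by (rule H_carrier)
  have NQ: "N * Qmat A (st K) \<in> carrier_mat n (Suc K)" using Nc Qc by simp
  have cH: "col (cr_H M A C N b (Suc K)) j \<in> carrier_vec (Suc K)" using Hc j by simp
  have "col (N * Qmat A (st K) * cr_H M A C N b (Suc K)) j = (N * Qmat A (st K)) *\<^sub>v col (cr_H M A C N b (Suc K)) j"
    using NQ Hc j by simp
  also have "\<dots> = N *\<^sub>v (Qmat A (st K) *\<^sub>v col (cr_H M A C N b (Suc K)) j)"
    using Nc Qc cH by simp
  also have "\<dots> = transpose_mat A *\<^sub>v vv (st j) + tt (st j)"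
    unfolding colH[OF j Z I] using F3 I j by simp
  finally show ?thesis .
qed

lemma colB:
  assumes j: "j < k"
  shows "col (cr_B M A C N b k) j = al (st j) \<cdot>\<^sub>v unit_vec k j +
     (if j = 0 then 0\<^sub>v k else cr_beta_next A N (st (j - 1)) \<cdot>\<^sub>v unit_vec k (j - 1))"
proof (cases j)
  case 0
  show ?thesis using j unfolding cr_B_def cr_alpha_def 0
    by (intro eq_vecI) (auto simp: unit_vec_def)
next
  case (Suc j')
  show ?thesis using j unfolding cr_B_def cr_alpha_def Suc
    by (intro eq_vecI) (auto simp: unit_vec_def)
qed

lemma combo:
  assumes v: "v \<in> carrier_vec m" "v' \<in> carrier_vec m" and t: "t \<in> carrier_vec n" "t' \<in> carrier_vec n"
  shows "transpose_mat A *\<^sub>v (\<alpha> \<cdot>\<^sub>v v + \<beta> \<cdot>\<^sub>v v') + (\<alpha> \<cdot>\<^sub>v t + \<beta> \<cdot>\<^sub>v t')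
     = \<alpha> \<cdot>\<^sub>v (transpose_mat A *\<^sub>v v + t) + \<beta> \<cdot>\<^sub>v (transpose_mat A *\<^sub>v v' + t')"
proof -
  have AT: "transpose_mat A \<in> carrier_mat n m" using A by simp
  have "transpose_mat A *\<^sub>v (\<alpha> \<cdot>\<^sub>v v + \<beta> \<cdot>\<^sub>v v') = \<alpha> \<cdot>\<^sub>v (transpose_mat A *\<^sub>v v) + \<beta> \<cdot>\<^sub>v (transpose_mat A *\<^sub>v v')"
    using AT v by (simp add: mult_add_distrib_mat_vec[of _ n m] mv_smult[OF AT])
  moreover have "transpose_mat A *\<^sub>v v \<in> carrier_vec n" "transpose_mat A *\<^sub>v v' \<in> carrier_vec n"
    using AT v by auto
  ultimately show ?thesis using t A by (intro eq_vecI) (auto simp: algebra_simps)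
qed

lemma combo0:
  assumes v: "v \<in> carrier_vec m" and t: "t \<in> carrier_vec n"
  shows "transpose_mat A *\<^sub>v (\<alpha> \<cdot>\<^sub>v v) + \<alpha> \<cdot>\<^sub>v t = \<alpha> \<cdot>\<^sub>v (transpose_mat A *\<^sub>v v + t)"
proof -
  have AT: "transpose_mat A \<in> carrier_mat n m" using A by simp
  have "transpose_mat A *\<^sub>v (\<alpha> \<cdot>\<^sub>v v) = \<alpha> \<cdot>\<^sub>v (transpose_mat A *\<^sub>v v)"
    using mv_smult[OF AT v] .
  moreover have "transpose_mat A *\<^sub>v v \<in> carrier_vec n" using AT v by auto
  ultimately show ?thesis using t A by (intro eq_vecI) (auto simp: algebra_simps)
qed

lemma SQ_eq:
  assumes Z: "cr_beta_next A N (st K) = 0"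
    and I: "\<forall>i\<le>K. INV m n M A C N (st i) i"
  shows "transpose_mat A * (minv M * (A * Qmat A (st K))) + C * Qmat A (st K)
     = N * Qmat A (st K) * cr_H M A C N b (Suc K) * cr_B M A C N b (Suc K)"
proof -
  define k where "k = Suc K"
  define Q where "Q = Qmat A (st K)"
  define X where "X = N * Q * cr_H M A C N b k"
  have Qc: "Q \<in> carrier_mat n k" unfolding Q_def k_def by (rule Qc_st)
  have Xc: "X \<in> carrier_mat n k" unfolding X_def using Nc Qc H_carrier[of k] by simp
  have Bc: "cr_B M A C N b k \<in> carrier_mat k k" by (rule B_carrier)
  have AT: "transpose_mat A \<in> carrier_mat n m" using A by simp
  have LHSc: "transpose_mat A * (minv M * (A * Q)) \<in> carrier_mat n k" using AT Mic A Qc by simp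
  have CQc: "C * Q \<in> carrier_mat n k" using Cc Qc by simp
  have colX: "\<And>j. j < k \<Longrightarrow> col X j = transpose_mat A *\<^sub>v vv (st j) + tt (st j)"
    unfolding X_def Q_def k_def using colNQH[OF _ Z I] by simp
  show ?thesis unfolding Q_def[symmetric] k_def[symmetric] X_def[symmetric]
  proof (rule mat_col_eqI)
    show "dim_row (transpose_mat A * (minv M * (A * Q)) + C * Q) = dim_row (X * cr_B M A C N b k)"
      using LHSc Xc Cc by simp
    show "dim_col (transpose_mat A * (minv M * (A * Q)) + C * Q) = dim_col (X * cr_B M A C N b k)"
      using CQc Bc Qc Xc by simp
    fix j assume "j < dim_col (X * cr_B M A C N b k)"
    hence j: "j < k" using Bc by simp
    have Ij: "INV m n M A C N (st j) j" using I j k_def by simp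
    have sub: "set (qs (st K)) \<subseteq> carrier_vec n" using I unfolding INV_def by simp
    have colQ: "col Q j = qs (st j) ! j"
    proof -
      have "col Q j = qs (st K) ! j" unfolding Q_def Qmat_st
        using j len_qs[of K] k_def sub by (intro col_mat_of_cols) auto
      thus ?thesis using qs_prefix[of j K] j k_def by simp
    qed
    have qc: "qs (st j) ! j \<in> carrier_vec n" using colQ Qc j by (metis col_dim carrier_matD(1) carrier_vecI)
    have "col (transpose_mat A * (minv M * (A * Q)) + C * Q) j
        = transpose_mat A *\<^sub>v (minv M *\<^sub>v (A *\<^sub>v qs (st j) ! j)) + C *\<^sub>v qs (st j) ! j"
    proof -
      have c1: "col (transpose_mat A * (minv M * (A * Q)) + C * Q) j = col (transpose_mat A * (minv M * (A * Q))) j + col (C * Q) j"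
        using LHSc CQc j by (rule col_add)
      have MAQ: "minv M * (A * Q) \<in> carrier_mat m k" using Mic A Qc by simp
      have AQ: "A * Q \<in> carrier_mat m k" using A Qc by simp
      have c2: "col (transpose_mat A * (minv M * (A * Q))) j = transpose_mat A *\<^sub>v col (minv M * (A * Q)) j"
        using AT MAQ j by (rule col_mult2)
      have c3: "col (minv M * (A * Q)) j = minv M *\<^sub>v col (A * Q) j" using Mic AQ j by (rule col_mult2)
      have c4: "col (A * Q) j = A *\<^sub>v col Q j" using A Qc j by (rule col_mult2)
      have c5: "col (C * Q) j = C *\<^sub>v col Q j" using Cc Qc j by (rule col_mult2)
      show ?thesis unfolding c1 c2 c3 c4 c5 colQ ..
    qed
    also have "\<dots> = col (X * cr_B M A C N b k) j"
    proof (cases j)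
      case 0
      have "col (X * cr_B M A C N b k) j = X *\<^sub>v (al (st 0) \<cdot>\<^sub>v unit_vec k 0 + 0\<^sub>v k)"
        using Xc Bc j colB[OF j] 0 by simp
      also have "\<dots> = al (st 0) \<cdot>\<^sub>v col X 0"
        using Xc j 0 mult_unit_vec_col[OF Xc] mv_smult[OF Xc] by simp
      finally show ?thesis using 0 F12_0 colX[of 0] j combo0 Ij unfolding INV_def by simp
    next
      case (Suc j')
      have Ij': "INV m n M A C N (st j') j'" using I j k_def Suc by simp
      have "col (X * cr_B M A C N b k) j = X *\<^sub>v (al (st j) \<cdot>\<^sub>v unit_vec k j + cr_beta_next A N (st j') \<cdot>\<^sub>v unit_vec k j')"
        using Xc Bc j colB[OF j] Suc by simp
      also have "\<dots> = al (st j) \<cdot>\<^sub>v col X j + cr_beta_next A N (st j') \<cdot>\<^sub>v col X j'"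
        using Xc j Suc mult_unit_vec_col[OF Xc] mv_smult[OF Xc] lin2[OF Xc] by simp
      finally show ?thesis using Suc F12_Suc[OF Ij'] colX[of j] colX[of j'] j combo Ij Ij' Ij
        unfolding INV_def by simp
    qed
    finally show "col (transpose_mat A * (minv M * (A * Q)) + C * Q) j = col (X * cr_B M A C N b k) j" .
  qed
qed

lemma S_apply:
  assumes Z: "cr_beta_next A N (st K) = 0"
    and I: "\<forall>i\<le>K. INV m n M A C N (st i) i"
    and z: "z \<in> carrier_vec (Suc K)"
  shows "transpose_mat A *\<^sub>v (minv M *\<^sub>v (A *\<^sub>v (Qmat A (st K) *\<^sub>v z))) + C *\<^sub>v (Qmat A (st K) *\<^sub>v z)
     = N *\<^sub>v (Qmat A (st K) *\<^sub>v (cr_H M A C N b (Suc K) *\<^sub>v (cr_B M A C N b (Suc K) *\<^sub>v z)))"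
proof -
  define k where "k = Suc K"
  define Q where "Q = Qmat A (st K)"
  define H where "H = cr_H M A C N b k"
  define B where "B = cr_B M A C N b k"
  have Qc: "Q \<in> carrier_mat n k" unfolding Q_def k_def by (rule Qc_st)
  have Hc: "H \<in> carrier_mat k k" unfolding H_def by (rule H_carrier)
  have Bc: "B \<in> carrier_mat k k" unfolding B_def by (rule B_carrier)
  have AT: "transpose_mat A \<in> carrier_mat n m" using A by simp
  have zc: "z \<in> carrier_vec k" using z k_def by simp
  have E: "transpose_mat A * (minv M * (A * Q)) + C * Q = N * Q * H * B"
    using SQ_eq[OF Z I] unfolding Q_def H_def B_def k_def .
  have MAQ: "minv M * (A * Q) \<in> carrier_mat m k" using Mic A Qc by simp
  have AQ: "A * Q \<in> carrier_mat m k" using A Qc by simp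
  have L1: "transpose_mat A * (minv M * (A * Q)) \<in> carrier_mat n k" using AT MAQ by simp
  have CQ: "C * Q \<in> carrier_mat n k" using Cc Qc by simp
  have "(transpose_mat A * (minv M * (A * Q)) + C * Q) *\<^sub>v z = (transpose_mat A * (minv M * (A * Q))) *\<^sub>v z + (C * Q) *\<^sub>v z"
    using L1 CQ zc by (rule add_mult_distrib_mat_vec)
  also have "(transpose_mat A * (minv M * (A * Q))) *\<^sub>v z = transpose_mat A *\<^sub>v ((minv M * (A * Q)) *\<^sub>v z)"
    using AT MAQ zc by (rule assoc_mult_mat_vec)
  also have "(minv M * (A * Q)) *\<^sub>v z = minv M *\<^sub>v ((A * Q) *\<^sub>v z)"
    using Mic AQ zc by (rule assoc_mult_mat_vec)
  also have "(A * Q) *\<^sub>v z = A *\<^sub>v (Q *\<^sub>v z)"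
    using A Qc zc by (rule assoc_mult_mat_vec)
  also have "(C * Q) *\<^sub>v z = C *\<^sub>v (Q *\<^sub>v z)"
    using Cc Qc zc by (rule assoc_mult_mat_vec)
  finally have 1: "(transpose_mat A * (minv M * (A * Q)) + C * Q) *\<^sub>v z
      = transpose_mat A *\<^sub>v (minv M *\<^sub>v (A *\<^sub>v (Q *\<^sub>v z))) + C *\<^sub>v (Q *\<^sub>v z)" .
  have NQ: "N * Q \<in> carrier_mat n k" using Nc Qc by simp
  have NQH: "N * Q * H \<in> carrier_mat n k" using NQ Hc by simp
  have Bz: "B *\<^sub>v z \<in> carrier_vec k" using Bc zc by simp
  have HBz: "H *\<^sub>v (B *\<^sub>v z) \<in> carrier_vec k" using Hc Bz by simp
  have "(N * Q * H * B) *\<^sub>v z = (N * Q * H) *\<^sub>v (B *\<^sub>v z)"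
    using NQH Bc zc by (rule assoc_mult_mat_vec)
  also have "\<dots> = (N * Q) *\<^sub>v (H *\<^sub>v (B *\<^sub>v z))"
    using NQ Hc Bz by (rule assoc_mult_mat_vec)
  also have "\<dots> = N *\<^sub>v (Q *\<^sub>v (H *\<^sub>v (B *\<^sub>v z)))"
    using Nc Qc HBz by (rule assoc_mult_mat_vec)
  finally have 2: "(N * Q * H * B) *\<^sub>v z = N *\<^sub>v (Q *\<^sub>v (H *\<^sub>v (B *\<^sub>v z)))" .
  show ?thesis using 1 2 E unfolding Q_def H_def B_def k_def by simp
qed

lemma S_inj:
  assumes x: "x \<in> carrier_vec n"
    and h: "transpose_mat A *\<^sub>v (minv M *\<^sub>v (A *\<^sub>v x)) + C *\<^sub>v x = 0\<^sub>v n"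
  shows "x = 0\<^sub>v n"
proof -
  define w where "w = minv M *\<^sub>v (A *\<^sub>v x)"
  have Ax: "A *\<^sub>v x \<in> carrier_vec m" using A x by simp
  have wc: "w \<in> carrier_vec m" unfolding w_def using Mic Ax by simp
  have Mw: "M *\<^sub>v w = A *\<^sub>v x" unfolding w_def using Minv(2)[OF Ax] .
  have ATw: "transpose_mat A *\<^sub>v w \<in> carrier_vec n" using A wc by simp
  have Cx: "C *\<^sub>v x \<in> carrier_vec n" using Cc x by simp
  have "x \<bullet> (transpose_mat A *\<^sub>v w + C *\<^sub>v x) = 0" using h x unfolding w_def by simp
  hence "x \<bullet> (transpose_mat A *\<^sub>v w) + x \<bullet> (C *\<^sub>v x) = 0"
    using scalar_prod_add_distrib[OF x ATw Cx] by simp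
  moreover have "x \<bullet> (transpose_mat A *\<^sub>v w) = w \<bullet> (M *\<^sub>v w)"
  proof -
    have "x \<bullet> (transpose_mat A *\<^sub>v w) = (transpose_mat A *\<^sub>v w) \<bullet> x" using comm_scalar_prod[OF x ATw] .
    also have "\<dots> = w \<bullet> (A *\<^sub>v x)" using transpose_vec_mult_scalar[OF A x wc] .
    finally show ?thesis using Mw by simp
  qed
  moreover have "x \<bullet> (C *\<^sub>v x) \<ge> 0" using Cpsd[OF x] .
  moreover have "w \<noteq> 0\<^sub>v m \<Longrightarrow> w \<bullet> (M *\<^sub>v w) > 0" using Mpd wc by blast
  ultimately have "w = 0\<^sub>v m" by fastforce
  hence "A *\<^sub>v x = 0\<^sub>v m" using Mw Mc by simp
  thus ?thesis using Ainj x by blast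
qed

lemma B_det:
  assumes I: "\<forall>i<k. INV m n M A C N (st i) i"
  shows "det (cr_B M A C N b k) \<noteq> 0"
proof -
  have ut: "upper_triangular (cr_B M A C N b k)" unfolding upper_triangular_def cr_B_def by auto
  have "det (cr_B M A C N b k) = prod_list (diag_mat (cr_B M A C N b k))"
    using det_upper_triangular[OF ut B_carrier] .
  moreover have "0 \<notin> set (diag_mat (cr_B M A C N b k))"
  proof
    assume "0 \<in> set (diag_mat (cr_B M A C N b k))"
    then obtain i where i: "i < k" and "cr_B M A C N b k $$ (i, i) = 0"
      unfolding diag_mat_def cr_B_def by auto
    hence "al (st i) = 0" unfolding cr_B_def cr_alpha_def by simp
    moreover have "al (st i) > 0" using I i unfolding INV_def by simp
    ultimately show False by simp
  qed
  ultimately show ?thesis by (simp add: prod_list_zero_iff)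
qed

lemma S_lin_minus:
  assumes x: "x \<in> carrier_vec n" and y: "y \<in> carrier_vec n"
  shows "transpose_mat A *\<^sub>v (minv M *\<^sub>v (A *\<^sub>v (x - y))) + C *\<^sub>v (x - y)
    = (transpose_mat A *\<^sub>v (minv M *\<^sub>v (A *\<^sub>v x)) + C *\<^sub>v x) - (transpose_mat A *\<^sub>v (minv M *\<^sub>v (A *\<^sub>v y)) + C *\<^sub>v y)"
proof -
  have AT: "transpose_mat A \<in> carrier_mat n m" using A by simp
  have 1: "A *\<^sub>v (x - y) = A *\<^sub>v x - A *\<^sub>v y" using mult_minus_distrib_mat_vec[OF A x y] .
  have 2: "minv M *\<^sub>v (A *\<^sub>v x - A *\<^sub>v y) = minv M *\<^sub>v (A *\<^sub>v x) - minv M *\<^sub>v (A *\<^sub>v y)"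
    using mult_minus_distrib_mat_vec[OF Mic] A x y by simp
  have 3: "transpose_mat A *\<^sub>v (minv M *\<^sub>v (A *\<^sub>v x) - minv M *\<^sub>v (A *\<^sub>v y))
     = transpose_mat A *\<^sub>v (minv M *\<^sub>v (A *\<^sub>v x)) - transpose_mat A *\<^sub>v (minv M *\<^sub>v (A *\<^sub>v y))"
    using mult_minus_distrib_mat_vec[OF AT] Mic A x y by simp
  have 4: "C *\<^sub>v (x - y) = C *\<^sub>v x - C *\<^sub>v y" using mult_minus_distrib_mat_vec[OF Cc x y] .
  have c1: "transpose_mat A *\<^sub>v (minv M *\<^sub>v (A *\<^sub>v x)) \<in> carrier_vec n" using AT Mic A x by simp
  have c2: "transpose_mat A *\<^sub>v (minv M *\<^sub>v (A *\<^sub>v y)) \<in> carrier_vec n" using AT Mic A y by simp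
  have c3: "C *\<^sub>v x \<in> carrier_vec n" "C *\<^sub>v y \<in> carrier_vec n" using Cc x y by auto
  show ?thesis unfolding 1 2 3 4 using c1 c2 c3 A Cc by (intro eq_vecI) auto
qed

lemma final:
  fixes u_star p_star :: "real vec"
  assumes I: "\<forall>i\<le>K. INV m n M A C N (st i) i" and Z: "cr_beta_next A N (st K) = 0"
    and us: "u_star \<in> carrier_vec m" and ps: "p_star \<in> carrier_vec n"
    and eq1: "M *\<^sub>v u_star + A *\<^sub>v p_star = 0\<^sub>v m"
    and eq2: "transpose_mat A *\<^sub>v u_star - C *\<^sub>v p_star = b"
  shows "cr_u M A C N b (Suc K) = u_star \<and> cr_p M A C N b (Suc K) = p_star"
proof -
  define k where "k = Suc K"
  define Q where "Q = Qmat A (st K)"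
  define H where "H = cr_H M A C N b k"
  define B where "B = cr_B M A C N b k"
  define Sop where "Sop x = transpose_mat A *\<^sub>v (minv M *\<^sub>v (A *\<^sub>v x)) + C *\<^sub>v x" for x
  have Qc: "Q \<in> carrier_mat n k" unfolding Q_def k_def by (rule Qc_st)
  have Hc: "H \<in> carrier_mat k k" unfolding H_def by (rule H_carrier)
  have Bc: "B \<in> carrier_mat k k" unfolding B_def by (rule B_carrier)
  have SA: "\<And>z. z \<in> carrier_vec k \<Longrightarrow> Sop (Q *\<^sub>v z) = N *\<^sub>v (Q *\<^sub>v (H *\<^sub>v (B *\<^sub>v z)))"
    unfolding Sop_def Q_def H_def B_def k_def using S_apply[OF Z I] by simp
  have Sinj: "\<And>x. x \<in> carrier_vec n \<Longrightarrow> Sop x = 0\<^sub>v n \<Longrightarrow> x = 0\<^sub>v n"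
    unfolding Sop_def using S_inj by blast
  have Binj: "\<And>v. v \<in> carrier_vec k \<Longrightarrow> B *\<^sub>v v = 0\<^sub>v k \<Longrightarrow> v = 0\<^sub>v k"
  proof -
    have "det B \<noteq> 0" unfolding B_def using B_det I k_def by simp
    thus "\<And>v. v \<in> carrier_vec k \<Longrightarrow> B *\<^sub>v v = 0\<^sub>v k \<Longrightarrow> v = 0\<^sub>v k"
      using det_0_iff_vec_prod_zero[OF Bc] by blast
  qed
  have IK: "INV m n M A C N (st K) K" using I by simp
  have QQ: "transpose_mat Q * (N * Q) = 1\<^sub>m k" using QNQ(2)[OF IK] unfolding Q_def k_def .
  have Hinj: "\<And>x. x \<in> carrier_vec k \<Longrightarrow> H *\<^sub>v x = 0\<^sub>v k \<Longrightarrow> x = 0\<^sub>v k"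
  proof -
    fix x assume x: "x \<in> carrier_vec k" and Hx: "H *\<^sub>v x = 0\<^sub>v k"
    define z where "z = minv B *\<^sub>v x"
    have zc: "z \<in> carrier_vec k" unfolding z_def using minv_apply(3)[OF Bc Binj x] .
    have Bz: "B *\<^sub>v z = x" unfolding z_def using minv_apply(2)[OF Bc Binj x] .
    have "Sop (Q *\<^sub>v z) = 0\<^sub>v n" using SA[OF zc] Bz Hx Qc Nc by simp
    hence Qz: "Q *\<^sub>v z = 0\<^sub>v n" using Sinj Qc zc by simp
    have "z = (transpose_mat Q * (N * Q)) *\<^sub>v z" using QQ zc by simp
    also have "\<dots> = transpose_mat Q *\<^sub>v ((N * Q) *\<^sub>v z)"
      by (rule assoc_mult_mat_vec) (use Qc Nc zc in auto)
    also have "(N * Q) *\<^sub>v z = N *\<^sub>v (Q *\<^sub>v z)"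
      by (rule assoc_mult_mat_vec) (use Qc Nc zc in auto)
    finally have "z = 0\<^sub>v k" using Qz Nc Qc by simp
    thus "x = 0\<^sub>v k" using Bz Bc by simp
  qed
  define \<beta>1 where "\<beta>1 = cr_beta M A C N b 1"
  define e where "e = \<beta>1 \<cdot>\<^sub>v unit_vec k 0"
  define xv where "xv = minv H *\<^sub>v e"
  define zv where "zv = minv B *\<^sub>v xv"
  have ec: "e \<in> carrier_vec k" unfolding e_def by simp
  have xc: "xv \<in> carrier_vec k" unfolding xv_def using minv_apply(3)[OF Hc Hinj ec] .
  have Hx: "H *\<^sub>v xv = e" unfolding xv_def using minv_apply(2)[OF Hc Hinj ec] .
  have zc: "zv \<in> carrier_vec k" unfolding zv_def using minv_apply(3)[OF Bc Binj xc] .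
  have Bz: "B *\<^sub>v zv = xv" unfolding zv_def using minv_apply(2)[OF Bc Binj xc] .
  have y: "cr_y M A C N b k = - zv"
    unfolding cr_y_def zv_def xv_def e_def \<beta>1_def H_def B_def ..
  define p where "p = Q *\<^sub>v (- zv)"
  have pdef: "cr_p M A C N b k = p" using y unfolding cr_p_def p_def Q_def k_def by simp
  have pc: "p \<in> carrier_vec n" unfolding p_def using Qc zc by simp
  have q0: "qs (st 0) ! 0 = (1 / \<beta>1) \<cdot>\<^sub>v (minv N *\<^sub>v b)" unfolding \<beta>1_def by (simp add: cr_init_def Let_def)
  have I0: "INV m n M A C N (st 0) 0" using inv_init by simp
  have sub: "set (qs (st K)) \<subseteq> carrier_vec n" using IK unfolding INV_def by simp
  have colQ0: "col Q 0 = qs (st 0) ! 0"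
  proof -
    have "col Q 0 = qs (st K) ! 0" unfolding Q_def Qmat_st
      using len_qs[of K] sub by (intro col_mat_of_cols) auto
    thus ?thesis using qs_prefix[of 0 K] by simp
  qed
  have Nib: "minv N *\<^sub>v b \<in> carrier_vec n" using Nic b by simp
  have Qe: "N *\<^sub>v (Q *\<^sub>v e) = b"
  proof -
    have b1: "\<beta>1 \<noteq> 0"
    proof
      assume "\<beta>1 = 0"
      hence "qs (st 0) ! 0 = 0\<^sub>v n" unfolding q0 using Nib Nic by (intro eq_vecI) auto
      moreover have "qs (st 0) ! 0 \<bullet> (N *\<^sub>v (qs (st 0) ! 0)) = 1" using I0 unfolding INV_def by simp
      ultimately show False using Nc by simp
    qed
    have "Q *\<^sub>v e = \<beta>1 \<cdot>\<^sub>v col Q 0" unfolding e_def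
      using mv_smult[OF Qc] mult_unit_vec_col[OF Qc] k_def by simp
    hence "N *\<^sub>v (Q *\<^sub>v e) = \<beta>1 \<cdot>\<^sub>v ((1 / \<beta>1) \<cdot>\<^sub>v (N *\<^sub>v (minv N *\<^sub>v b)))"
      unfolding colQ0 q0 using mv_smult[OF Nc] Nib by simp
    also have "\<dots> = b" using Ninv(2)[OF b] b1 by (simp add: smult_inv_cancel)
    finally show ?thesis .
  qed
  have Sp: "Sop p = - b"
  proof -
    have mz: "- zv \<in> carrier_vec k" using zc by simp
    have "Sop p = N *\<^sub>v (Q *\<^sub>v (H *\<^sub>v (B *\<^sub>v (- zv))))" unfolding p_def using SA[OF mz] .
    also have "B *\<^sub>v (- zv) = - xv" using mv_uminus[OF Bc zc] Bz by simp
    also have "H *\<^sub>v (- xv) = - e" using mv_uminus[OF Hc xc] Hx by simp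
    also have "Q *\<^sub>v (- e) = - (Q *\<^sub>v e)" using mv_uminus[OF Qc ec] .
    also have "N *\<^sub>v (- (Q *\<^sub>v e)) = - (N *\<^sub>v (Q *\<^sub>v e))" using mv_uminus[OF Nc] Qc ec by simp
    finally show ?thesis using Qe by simp
  qed
  define w where "w = minv M *\<^sub>v (A *\<^sub>v p_star)"
  have Aps: "A *\<^sub>v p_star \<in> carrier_vec m" using A ps by simp
  have Muc: "M *\<^sub>v u_star \<in> carrier_vec m" using Mc us by simp
  have Mus: "M *\<^sub>v u_star = - (A *\<^sub>v p_star)"
  proof (rule eq_vecI)
    fix i assume "i < dim_vec (- (A *\<^sub>v p_star))"
    hence i: "i < m" using Aps A by simp
    have "(M *\<^sub>v u_star + A *\<^sub>v p_star) $ i = 0\<^sub>v m $ i" using eq1 by simp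
    thus "(M *\<^sub>v u_star) $ i = (- (A *\<^sub>v p_star)) $ i" using i Muc Aps A by (simp add: eq_neg_iff_add_eq_0)
  qed (use Mc A in simp)
  have wc: "w \<in> carrier_vec m" unfolding w_def using Mic Aps by simp
  have use: "u_star = - w"
  proof -
    have "u_star = minv M *\<^sub>v (M *\<^sub>v u_star)" using Minv(1)[OF us] by simp
    also have "\<dots> = - w" unfolding Mus w_def using mv_uminus[OF Mic Aps] .
    finally show ?thesis .
  qed
  have AT: "transpose_mat A \<in> carrier_mat n m" using A by simp
  have ATw: "transpose_mat A *\<^sub>v w \<in> carrier_vec n" using AT wc by simp
  have Cp: "C *\<^sub>v p_star \<in> carrier_vec n" using Cc ps by simp
  have Sps: "Sop p_star = - b"
  proof -
    have e2: "- (transpose_mat A *\<^sub>v w) - C *\<^sub>v p_star = b"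
      using eq2 unfolding use mv_uminus[OF AT wc] .
    show ?thesis unfolding Sop_def w_def[symmetric]
    proof (rule eq_vecI)
      fix i assume "i < dim_vec (- b)"
      hence i: "i < n" using b by simp
      have "(- (transpose_mat A *\<^sub>v w) - C *\<^sub>v p_star) $ i = b $ i" using e2 by simp
      thus "(transpose_mat A *\<^sub>v w + C *\<^sub>v p_star) $ i = (- b) $ i" using i ATw Cp b A Cc by simp
    qed (use ATw Cp b Cc in simp)
  qed
  have "Sop (p - p_star) = Sop p - Sop p_star" unfolding Sop_def using S_lin_minus[OF pc ps] .
  also have "\<dots> = 0\<^sub>v n" unfolding Sp Sps using b by (intro eq_vecI) auto
  finally have d0: "p - p_star = 0\<^sub>v n" using Sinj pc ps by simp
  have pp: "p = p_star"
  proof (rule eq_vecI)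
    fix i assume "i < dim_vec p_star"
    hence i: "i < n" using ps by simp
    have "(p - p_star) $ i = 0\<^sub>v n $ i" using d0 by simp
    thus "p $ i = p_star $ i" using pc ps i by simp
  qed (use pc ps in simp)
  have "cr_u M A C N b k = - w" unfolding cr_u_def pdef pp w_def ..
  thus ?thesis using pdef pp use k_def by simp
qed

end

theorem mainTheorem9:
  fixes m n :: nat and M A C N :: "real mat" and b u_star p_star :: "real vec"
  assumes M: "pos_def_mat m M"
    and A: "A \<in> carrier_mat m n" and nm: "n \<le> m"
    and Arank: "vec_space.rank m A = n"
    and C: "psd_mat n C" and Csym: "transpose_mat C = C"
    and b: "b \<in> carrier_vec n" and b0: "b \<noteq> 0\<^sub>v n"
    and N: "pos_def_mat n N" and Nsym: "transpose_mat N = N"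
    and us: "u_star \<in> carrier_vec m" and ps: "p_star \<in> carrier_vec n"
    and eq1: "M *\<^sub>v u_star + A *\<^sub>v p_star = 0\<^sub>v m"
    and eq2: "transpose_mat A *\<^sub>v u_star - C *\<^sub>v p_star = b"
  shows "(\<forall>k \<ge> 1. (\<forall>j. 1 \<le> j \<and> j < k \<longrightarrow> cr_beta M A C N b (j + 1) \<noteq> 0)
             \<longrightarrow> cr_alpha M A C N b k > 0)
       \<and> (\<forall>k \<ge> 1. (\<forall>j. 1 \<le> j \<and> j < k \<longrightarrow> cr_beta M A C N b (j + 1) \<noteq> 0)
             \<and> cr_beta M A C N b (k + 1) = 0
             \<longrightarrow> cr_u M A C N b k = u_star \<and> cr_p M A C N b k = p_star)"
proof -
  note IS = inv_state[OF M A Arank C Csym b b0 N Nsym]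
  have P1: "INV m n M A C N (cr_state M A C N b K) K"
    if h: "\<forall>j. 1 \<le> j \<and> j < Suc K \<longrightarrow> cr_beta M A C N b (j + 1) \<noteq> 0" for K
    using IS[of K] h by auto
  show ?thesis
  proof (intro conjI allI impI)
    fix k :: nat assume k: "1 \<le> k" and h: "\<forall>j. 1 \<le> j \<and> j < k \<longrightarrow> cr_beta M A C N b (j + 1) \<noteq> 0"
    obtain K where K: "k = Suc K" using k by (cases k) auto
    have "INV m n M A C N (cr_state M A C N b K) K" using P1 h K by simp
    thus "cr_alpha M A C N b k > 0" unfolding INV_def cr_alpha_def K by simp
  next
    fix k :: nat assume k: "1 \<le> k" and h: "(\<forall>j. 1 \<le> j \<and> j < k \<longrightarrow> cr_beta M A C N b (j + 1) \<noteq> 0)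
             \<and> cr_beta M A C N b (k + 1) = 0"
    obtain K where K: "k = Suc K" using k by (cases k) auto
    have I: "\<forall>i\<le>K. INV m n M A C N (cr_state M A C N b i) i"
    proof (intro allI impI)
      fix i assume "i \<le> K"
      thus "INV m n M A C N (cr_state M A C N b i) i" using P1[of i] h K by auto
    qed
    have Z: "cr_beta_next A N (cr_state M A C N b K) = 0" using h K by simp
    show "cr_u M A C N b k = u_star" "cr_p M A C N b k = p_star"
      using final[OF M A Arank C Csym b b0 N Nsym I Z us ps eq1 eq2] K by auto
  qed
qed

end
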